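(* Let $\pi_0\in\Pi_{\mathrm{all}}$ and let $F$ be a Legendre function whose domain is a closed convex set $\mathcal{K}\supseteq\mathbb{R}^d_{\ge0}$. Suppose $F$ is either (1) quadratic: $F(p)=\frac12p^\top Ap+b^\top p$ with $A\succ0$, or (2) separable: $F(p)=\sum_{i=1}^df(p_i)$ for a one-dimensional convex function $f$. Let $\overline\pi$ be the minimizer of $\pi\mapsto\mathbb{E}_{x\sim\mathcal{D}_{\mathcal{X}}}[\mathsf{B}_F(\pi(x)\parallel\pi_0(x))]$ over the linear subspace $\mathcal{C}^{\dagger\dagger}_{\mathrm{coh}}$. Then $\overline\pi\in\mathcal{C}^\dagger_{\mathrm{coh}}$.
   Context: $\mathcal{X},\mathcal{Y}$ finite, $d=|\mathcal{Y}|$; $\Pi_{\mathrm{all}}=\Delta(\mathcal{Y})^{\mathcal{X}}$, $\Pi^\dagger_{\mathrm{all}}=(\mathbb{R}^d_{+})^{\mathcal{X}}$. $\mathcal{D}_{\mathcal{X}}$ a full-support distribution on $\mathcal{X}$; $\Phi\colon\mathcal{X}\to\mathcal{X}$ an involution. $\mathcal{C}^{\dagger\dagger}_{\mathrm{coh}}=\{\pi\colon\mathcal{X}\to\mathbb{R}^d:\pi(x)=\pi(\Phi(x))\ \forall x\}$ and $\mathcal{C}^\dagger_{\mathrm{coh}}=\mathcal{C}^{\dagger\dagger}_{\mathrm{coh}}\cap\Pi^\dagger_{\mathrm{all}}$. $\mathsf{B}_F(p\parallel q)=F(p)-F(q)-\langle\nabla F(q),p-q\rangle$, extended to boundary points as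 needed. A Legendre function is proper, closed, convex, differentiable on the interior $\Omega$ of its domain, with $\nabla F\colon\Omega\to\mathrm{int}(\mathrm{dom}F^* )$ a bijection. *)

theory Defs
  imports "HOL-Analysis.Analysis"
begin

text \<open>Vectors in R^d are rendered as real^'y with 'y a finite type, d = CARD('y).
A convex function with effective domain K is given by a pair (F, K): F is +infinity outside K.\<close>

definition gradient :: "(real^'n \<Rightarrow> real) \<Rightarrow> real^'n \<Rightarrow> real^'n" where
  "gradient F x = (SOME g. GDERIV F x :> g)"

definition conjugate :: "(real^'n \<Rightarrow> real) \<Rightarrow> (real^'n) set \<Rightarrow> real^'n \<Rightarrow> ereal" where
  "conjugate F K y = (SUP x\<in>K. ereal (inner x y - F x))"

definition conj_dom :: "(real^'n \<Rightarrow> real) \<Rightarrow> (real^'n) set \<Rightarrow> (real^'n) set" where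
  "conj_dom F K = {y. conjugate F K y < \<infinity>}"

definition legendre :: "(real^'n \<Rightarrow> real) \<Rightarrow> (real^'n) set \<Rightarrow> bool" where
  "legendre F K \<longleftrightarrow>
     K \<noteq> {} \<and> convex K \<and> convex_on K F \<and>
     closed {(x, t). x \<in> K \<and> F x \<le> t} \<and>
     (\<forall>x\<in>interior K. F differentiable (at x)) \<and>
     bij_betw (gradient F) (interior K) (interior (conj_dom F K))"

text \<open>One-sided directional derivative of a convex function at q in direction v
(for convex F the difference quotient is monotone, so the limit t -> 0+ is an infimum).\<close>
definition dir_deriv :: "(real^'n \<Rightarrow> real) \<Rightarrow> real^'n \<Rightarrow> real^'n \<Rightarrow> ereal" where
  "dir_deriv F q v = (INF t\<in>{0<..1}. ereal ((F (q + t *\<^sub>R v) - F q) / t))"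

text \<open>Bregman divergence B_F(p || q) = F p - F q - <grad F q, p - q>, extended to boundary
points of the domain via the directional derivative, and +infinity for p outside dom F.\<close>
definition bregman :: "(real^'n \<Rightarrow> real) \<Rightarrow> (real^'n) set \<Rightarrow> real^'n \<Rightarrow> real^'n \<Rightarrow> ereal" where
  "bregman F K p q =
     (if p \<in> K then ereal (F p - F q) - dir_deriv F q (p - q) else \<infinity>)"

definition prob_simplex :: "(real^'n) set" where
  "prob_simplex = {p. (\<forall>i. 0 \<le> p $ i) \<and> (\<Sum>i\<in>UNIV. p $ i) = 1}"

definition nonneg_orthant :: "(real^'n) set" where
  "nonneg_orthant = {p. \<forall>i. 0 \<le> p $ i}"

definition coh_lin :: "('x \<Rightarrow> 'x) \<Rightarrow> ('x \<Rightarrow> real^'n) set" where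
  "coh_lin \<Phi> = {\<pi>. \<forall>x. \<pi> x = \<pi> (\<Phi> x)}"

definition coh_pos :: "('x \<Rightarrow> 'x) \<Rightarrow> ('x \<Rightarrow> real^'n) set" where
  "coh_pos \<Phi> = coh_lin \<Phi> \<inter> {\<pi>. \<forall>x. \<pi> x \<in> nonneg_orthant}"

definition bregman_obj :: "('x::finite \<Rightarrow> real) \<Rightarrow> (real^'n \<Rightarrow> real) \<Rightarrow> (real^'n) set
     \<Rightarrow> ('x \<Rightarrow> real^'n) \<Rightarrow> ('x \<Rightarrow> real^'n) \<Rightarrow> ereal" where
  "bregman_obj D F K \<pi>0 \<pi> = (\<Sum>x\<in>UNIV. ereal (D x) * bregman F K (\<pi> x) (\<pi>0 x))"

end

theory Submission
  imports Defs
begin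


lemma dd_le1:
  "dir_deriv F q v \<le> ereal (F (q + v) - F q)"
proof -
  have "dir_deriv F q v \<le> ereal ((F (q + 1 *\<^sub>R v) - F q) / 1)"
    unfolding dir_deriv_def by (rule INF_lower) auto
  then show ?thesis by simp
qed

lemma bregman_nonneg: "0 \<le> bregman F K p q"
proof (cases "p \<in> K")
  case True
  have "dir_deriv F q (p - q) \<le> ereal (F p - F q)" using dd_le1[of F q "p - q"] by simp
  then show ?thesis using True unfolding bregman_def
    by (cases "dir_deriv F q (p - q)") auto
qed (simp add: bregman_def)

lemma Q_mono:
  fixes F :: "real^'n \<Rightarrow> real"
  assumes cF: "convex_on K F" and cK: "convex K" and q: "q \<in> K" and p: "p \<in> K"
    and st: "0 < s" "s \<le> t" "t \<le> 1"
  shows "(F (q + s *\<^sub>R (p - q)) - F q) / s \<le> (F (q + t *\<^sub>R (p - q)) - F q) / t"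
proof -
  have pt: "q + t *\<^sub>R (p - q) \<in> K"
  proof -
    have "q + t *\<^sub>R (p - q) = (1 - t) *\<^sub>R q + t *\<^sub>R p" by (simp add: algebra_simps)
    moreover have "(1 - t) *\<^sub>R q + t *\<^sub>R p \<in> K"
      using cK q p st by (intro convexD_alt) auto
    ultimately show ?thesis by simp
  qed
  have t0: "0 < t" using st by simp
  have "q + s *\<^sub>R (p - q) = (1 - s/t) *\<^sub>R q + (s/t) *\<^sub>R (q + t *\<^sub>R (p - q))"
    using t0 by (simp add: algebra_simps)
  then have "F (q + s *\<^sub>R (p - q)) \<le> (1 - s/t) * F q + (s/t) * F (q + t *\<^sub>R (p - q))"
    using convex_onD[OF cF, of "s/t" q "q + t *\<^sub>R (p - q)"] st t0 q pt by simp
  then have "F (q + s *\<^sub>R (p - q)) - F q \<le> (s/t) * (F (q + t *\<^sub>R (p - q)) - F q)"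
    by (simp add: algebra_simps)
  then show ?thesis using st t0 by (simp add: field_simps)
qed



lemma slope_mono:
  fixes f :: "real \<Rightarrow> real"
  assumes f: "convex_on I f" and I: "x1 \<in> I" "x2 \<in> I" "y1 \<in> I" "y2 \<in> I"
    and le: "x1 \<le> y1" "x2 \<le> y2" "x1 < x2" "y1 < y2"
  shows "(f x1 - f x2) / (x1 - x2) \<le> (f y1 - f y2) / (y1 - y2)"
proof -
  have a: "(f x1 - f x2) / (x1 - x2) \<le> (f x1 - f y2) / (x1 - y2)"
  proof (cases "x2 = y2")
    case False
    then show ?thesis using convex_on_slope_le(1)[OF f I(1) I(4), of x2] le by simp
  qed simp
  have b: "(f x1 - f y2) / (x1 - y2) \<le> (f y1 - f y2) / (y1 - y2)"
  proof (cases "x1 = y1")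
    case False
    then show ?thesis using convex_on_slope_le(2)[OF f I(1) I(4), of y1] le by simp
  qed simp
  show ?thesis using a b by simp
qed

lemma convex_real_between:
  fixes I :: "real set"
  assumes "convex I" "a \<in> I" "b \<in> I" "a \<le> x" "x \<le> b"
  shows "x \<in> I"
  using assms is_interval_convex_1 is_interval_1 by metis

lemma sum_single_diff:
  fixes g h :: "'a::finite \<Rightarrow> real"
  assumes "\<forall>i. i \<noteq> k \<longrightarrow> g i = h i"
  shows "(\<Sum>i\<in>UNIV. g i) - (\<Sum>i\<in>UNIV. h i) = g k - h k"
proof -
  have "(\<Sum>i\<in>UNIV. g i) - (\<Sum>i\<in>UNIV. h i) = (\<Sum>i\<in>UNIV. g i - h i)"
    by (simp add: sum_subtractf)
  also have "\<dots> = (\<Sum>i\<in>UNIV. if i = k then g k - h k else 0)"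
    using assms by (intro sum.cong) auto
  also have "\<dots> = g k - h k" by simp
  finally show ?thesis .
qed

lemma aff:
  fixes f :: "real \<Rightarrow> real"
  assumes f: "convex_on I f" and I: "a \<in> I" "b \<in> I" and ab: "a < b"
    and m: "m = (a + b) / 2" and mid: "f m \<ge> (f a + f b) / 2"
    and x: "a \<le> x" "x \<le> b"
  shows "f x = f m + (f m - f b) / (m - b) * (x - m)"
proof -
  have cI: "convex I" using f convex_on_imp_convex by blast
  have amb: "a < m" "m < b" using m ab by auto
  have mI: "m \<in> I" using convex_real_between[OF cI I(1) I(2), of m] amb by linarith
  have mm: "(1 - 1/2) *\<^sub>R a + (1/2) *\<^sub>R b = m" by (simp add: m field_simps)
  have fm: "f m \<le> (f a + f b) / 2"
    using convex_onD[OF f, of "1/2" a b] I unfolding mm by (simp add: algebra_simps)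
  have fm2: "f m = (f a + f b) / 2" using fm mid by simp
  have sl: "(f a - f m) / (a - m) = (f m - f b) / (m - b)"
  proof -
    have e1: "a - m = m - b" using m by simp
    have e2: "f a - f m = f m - f b" using fm2 by simp
    show ?thesis unfolding e1 e2 ..
  qed
  have xI: "x \<in> I" using convex_real_between[OF cI I(1) I(2), of x] x by linarith
  define \<sigma> where "\<sigma> = (f m - f b) / (m - b)"
  have goal: "f x = f m + \<sigma> * (x - m)"
  proof -
  consider "x < m" | "x = m" | "x > m" by linarith
  then show ?thesis
  proof cases
    case 1
    have s1: "(f a - f m) / (a - m) \<le> (f x - f m) / (x - m)"
    proof (cases "x = a")
      case False
      then show ?thesis using convex_on_slope_le(2)[OF f I(1) mI, of x] 1 x by simp
    qed simp
    have s2: "(f x - f m) / (x - m) \<le> (f m - f b) / (m - b)"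
      using slope_mono[OF f xI mI mI I(2)] 1 amb by simp
    have "(f x - f m) / (x - m) = \<sigma>" using s1 s2 sl unfolding \<sigma>_def by linarith
    then have "f x - f m = \<sigma> * (x - m)" using 1 by (simp add: divide_eq_eq)
    then show ?thesis by (simp add: algebra_simps)
  next
    case 2 then show ?thesis by simp
  next
    case 3
    have s1: "(f m - f x) / (m - x) \<le> (f m - f b) / (m - b)"
    proof (cases "x = b")
      case False
      then show ?thesis using convex_on_slope_le(1)[OF f mI I(2), of x] 3 x by simp
    qed simp
    have s2: "(f a - f m) / (a - m) \<le> (f m - f x) / (m - x)"
      using slope_mono[OF f I(1) mI mI xI] 3 amb by simp
    have "(f m - f x) / (m - x) = \<sigma>" using s1 s2 sl unfolding \<sigma>_def by linarith
    then have "f m - f x = \<sigma> * (m - x)" using 3 by (simp add: divide_eq_eq)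
    then show ?thesis by (simp add: algebra_simps)
  qed
  qed
  then show ?thesis unfolding \<sigma>_def .
qed

lemma grad_eq:
  fixes F :: "real^'n \<Rightarrow> real"
  assumes d1: "(F has_derivative D1) (at P1)" and d2: "(F has_derivative D2) (at P2)"
    and r: "r > 0" and c: "\<forall>h. norm h < r \<longrightarrow> F (P2 + h) - F (P1 + h) = C"
  shows "D1 = D2"
proof -
  have s1: "((\<lambda>h. F (P1 + h)) has_derivative D1) (at 0)"
  proof -
    have "((\<lambda>h. P1 + h) has_derivative (\<lambda>x. x)) (at 0)" by (auto intro!: derivative_eq_intros)
    from has_derivative_compose[OF this, of F D1] d1 show ?thesis by simp
  qed
  have s2: "((\<lambda>h. F (P2 + h)) has_derivative D2) (at 0)"
  proof -
    have "((\<lambda>h. P2 + h) has_derivative (\<lambda>x. x)) (at 0)" by (auto intro!: derivative_eq_intros)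
    from has_derivative_compose[OF this, of F D2] d2 show ?thesis by simp
  qed
  have hd: "((\<lambda>h. F (P2 + h) - F (P1 + h)) has_derivative (\<lambda>h. D2 h - D1 h)) (at 0)"
    using has_derivative_diff[OF s2 s1] .
  have hc: "((\<lambda>h. F (P2 + h) - F (P1 + h)) has_derivative (\<lambda>h. 0)) (at 0)"
  proof (rule has_derivative_transform_within_open[of "\<lambda>h. C" _ _ _ "ball 0 r"])
    show "((\<lambda>h. C) has_derivative (\<lambda>h. 0)) (at 0)" by (rule has_derivative_const)
    show "open (ball (0::real^'n) r)" by simp
    show "(0::real^'n) \<in> ball 0 r" using r by simp
    fix x :: "real^'n" assume "x \<in> ball 0 r"
    then have "norm x < r" by simp
    then show "C = F (P2 + x) - F (P1 + x)" using c by simp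
  qed
  have "(\<lambda>h. D2 h - D1 h) = (\<lambda>h. 0)" using has_derivative_unique[OF hd hc] .
  then have "D2 h - D1 h = 0" for h by metis
  then show ?thesis by (intro ext) simp
qed



lemma sep_strict:
  fixes F :: "real^'n \<Rightarrow> real" and f :: "real \<Rightarrow> real"
  assumes leg: "legendre F K" and cI: "convex I" and cf: "convex_on I f"
    and KI: "K = {p. \<forall>i. p$i \<in> I}" and Fs: "\<forall>p\<in>K. F p = (\<Sum>i\<in>UNIV. f (p$i))"
    and aI: "a \<in> I" and a0: "a < 0" and zI: "0 \<in> I"
  shows "2 * f (a/2) < f a + f 0"
proof (rule ccontr)
  assume "\<not> ?thesis"
  then have mid: "f (a/2) \<ge> (f a + f 0)/2" by simp
  define \<sigma> where "\<sigma> = (f (a/2) - f 0) / (a/2 - 0)"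
  have affx: "f x = f (a/2) + \<sigma> * (x - a/2)" if "a \<le> x" "x \<le> 0" for x
    using aff[OF cf aI zI a0 _ mid, of x] that unfolding \<sigma>_def by simp
  define r where "r = -a/8"
  have r0: "r > 0" using a0 unfolding r_def by simp
  have inK: "y \<in> K" if "\<forall>j. a \<le> y$j \<and> y$j \<le> 0" for y
  proof -
    have "y$j \<in> I" for j using that convex_real_between[OF cI aI zI, of "y$j"] by blast
    then show ?thesis unfolding KI by blast
  qed
  have near: "a \<le> ((\<chi> j. s) + h)$j \<and> ((\<chi> j. s) + h)$j \<le> 0"
    if "a + r \<le> s" "s \<le> -r" "norm h < r" for s h and j :: 'n
  proof -
    have "\<bar>h$j\<bar> \<le> norm h" by (rule component_le_norm_cart)
    then show ?thesis using that by auto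
  qed
  define P1 :: "real^'n" where "P1 = (\<chi> j. 3*a/4)"
  define P2 :: "real^'n" where "P2 = (\<chi> j. a/4)"
  have s1: "a + r \<le> 3*a/4" "3*a/4 \<le> -r" and s2: "a + r \<le> a/4" "a/4 \<le> -r"
    using a0 unfolding r_def by auto
  have near1: "\<forall>j. a \<le> (P1 + h)$j \<and> (P1 + h)$j \<le> 0" if "norm h < r" for h
    using near[OF s1 that] unfolding P1_def by blast
  have near2: "\<forall>j. a \<le> (P2 + h)$j \<and> (P2 + h)$j \<le> 0" if "norm h < r" for h
    using near[OF s2 that] unfolding P2_def by blast
  have int1: "P1 \<in> interior K"
  proof (rule interiorI[of "ball P1 r"])
    show "ball P1 r \<subseteq> K"
    proof
      fix y assume "y \<in> ball P1 r"
      then have "norm (y - P1) < r" by (simp add: dist_norm norm_minus_commute)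
      from near1[OF this] have "y \<in> K" by (intro inK) simp
      then show "y \<in> K" .
    qed
  qed (use r0 in auto)
  have int2: "P2 \<in> interior K"
  proof (rule interiorI[of "ball P2 r"])
    show "ball P2 r \<subseteq> K"
    proof
      fix y assume "y \<in> ball P2 r"
      then have "norm (y - P2) < r" by (simp add: dist_norm norm_minus_commute)
      from near2[OF this] have "y \<in> K" by (intro inK) simp
      then show "y \<in> K" .
    qed
  qed (use r0 in auto)
  have diff: "\<forall>x\<in>interior K. F differentiable (at x)" and bij: "bij_betw (gradient F) (interior K) (interior (conj_dom F K))"
    using leg unfolding legendre_def by auto
  obtain D1 where D1: "(F has_derivative D1) (at P1)" using diff int1 differentiable_def by blast
  obtain D2 where D2: "(F has_derivative D2) (at P2)" using diff int2 differentiable_def by blast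
  have const: "\<forall>h. norm h < r \<longrightarrow> F (P2 + h) - F (P1 + h) = real CARD('n) * (\<sigma> * (a/4 - 3*a/4))"
  proof (intro allI impI)
    fix h :: "real^'n" assume h: "norm h < r"
    have k1: "P1 + h \<in> K" using near1[OF h] by (intro inK) simp
    have k2: "P2 + h \<in> K" using near2[OF h] by (intro inK) simp
    have "F (P2 + h) - F (P1 + h) = (\<Sum>j\<in>UNIV. f ((P2 + h)$j) - f ((P1 + h)$j))"
      using Fs k1 k2 by (simp add: sum_subtractf)
    also have "\<dots> = (\<Sum>j\<in>(UNIV::'n set). \<sigma> * (a/4 - 3*a/4))"
    proof (rule sum.cong[OF refl])
      fix j
      have "f ((P2 + h)$j) = f (a/2) + \<sigma> * ((P2 + h)$j - a/2)" by (rule affx) (use near2[OF h] in auto)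
      moreover have "f ((P1 + h)$j) = f (a/2) + \<sigma> * ((P1 + h)$j - a/2)" by (rule affx) (use near1[OF h] in auto)
      ultimately show "f ((P2 + h)$j) - f ((P1 + h)$j) = \<sigma> * (a/4 - 3*a/4)"
        unfolding P1_def P2_def by (simp add: algebra_simps)
    qed
    also have "\<dots> = real CARD('n) * (\<sigma> * (a/4 - 3*a/4))" by simp
    finally show "F (P2 + h) - F (P1 + h) = real CARD('n) * (\<sigma> * (a/4 - 3*a/4))" .
  qed
  have DD: "D1 = D2" using grad_eq[OF D1 D2 r0 const] .
  have "(\<lambda>g. GDERIV F P1 :> g) = (\<lambda>g. GDERIV F P2 :> g)"
  proof (intro ext iffI)
    fix g assume "GDERIV F P1 :> g"
    then have "(F has_derivative (\<lambda>h. h \<bullet> g)) (at P1)" unfolding gderiv_def .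
    then have "(\<lambda>h. h \<bullet> g) = D1" by (rule has_derivative_unique[OF _ D1])
    then show "GDERIV F P2 :> g" unfolding gderiv_def using D2 DD by simp
  next
    fix g assume "GDERIV F P2 :> g"
    then have "(F has_derivative (\<lambda>h. h \<bullet> g)) (at P2)" unfolding gderiv_def .
    then have "(\<lambda>h. h \<bullet> g) = D2" by (rule has_derivative_unique[OF _ D2])
    then show "GDERIV F P1 :> g" unfolding gderiv_def using D1 DD by simp
  qed
  then have "gradient F P1 = gradient F P2" unfolding gradient_def by simp
  then have "P1 = P2" using inj_onD[OF bij_betw_imp_inj_on[OF bij] _ int1 int2] by blast
  then have "P1 $ undefined = P2 $ undefined" by simp
  then have "3*a/4 = a/4" unfolding P1_def P2_def by simp
  then show False using a0 by simp
qed



lemma nonneg_in_I: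
  assumes KI: "K = {p. \<forall>i. p$i \<in> I}" and orth: "nonneg_orthant \<subseteq> (K :: (real^'n) set)"
    and r: "0 \<le> r"
  shows "r \<in> I"
proof -
  have "(\<chi> j. r) \<in> (nonneg_orthant :: (real^'n) set)" using r unfolding nonneg_orthant_def by simp
  then have "(\<chi> j. r) \<in> K" using orth by blast
  then show ?thesis unfolding KI by simp
qed

lemma seg_in:
  assumes cK: "convex K" and q: "q \<in> K" and p: "p \<in> K" and t: "0 \<le> t" "t \<le> 1"
  shows "q + t *\<^sub>R (p - q) \<in> K"
proof -
  have "q + t *\<^sub>R (p - q) = (1 - t) *\<^sub>R q + t *\<^sub>R p" by (simp add: algebra_simps)
  then show ?thesis using cK q p t by (metis convexD_alt)
qed

lemma sep_fin:
  fixes F :: "real^'n \<Rightarrow> real" and f :: "real \<Rightarrow> real"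
  assumes cI: "convex I" and cf: "convex_on I f"
    and KI: "K = {p. \<forall>i. p$i \<in> I}" and Fs: "\<forall>p\<in>K. F p = (\<Sum>i\<in>UNIV. f (p$i))"
    and orth: "nonneg_orthant \<subseteq> K" and cK: "convex K"
    and p: "p \<in> K" and q: "q \<in> nonneg_orthant" and le: "\<forall>i. p$i \<le> q$i"
  shows "bregman F K p q < \<infinity>"
proof -
  have qK: "q \<in> K" using q orth by blast
  have q0: "0 \<le> q$i" for i using q unfolding nonneg_orthant_def by simp
  define S where "S i = f (q$i + 1) - f (q$i)" for i
  have low: "(\<Sum>i\<in>UNIV. (p - q)$i * S i) \<le> (F (q + t *\<^sub>R (p - q)) - F q) / t"
    if t: "0 < t" "t \<le> 1" for t
  proof -
    have zK: "q + t *\<^sub>R (p - q) \<in> K" using seg_in[OF cK qK p] t by simp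
    have each: "t * ((p - q)$i * S i) \<le> f ((q + t *\<^sub>R (p - q))$i) - f (q$i)" for i
    proof (cases "p$i = q$i")
      case True then show ?thesis by simp
    next
      case False
      then have vneg: "p$i - q$i < 0" using le[rule_format, of i] by simp
      define x where "x = q$i + t * (p$i - q$i)"
      have xI: "x \<in> I" using zK unfolding KI x_def by simp
      have qI: "q$i \<in> I" using qK unfolding KI by simp
      have q1I: "q$i + 1 \<in> I" using nonneg_in_I[OF KI orth, of "q$i + 1"] q0[of i] by simp
      have xq: "x < q$i" unfolding x_def using vneg t by (simp add: mult_pos_neg)
      have a1: "(f x - f (q$i)) / (x - q$i) \<le> (f x - f (q$i + 1)) / (x - (q$i + 1))"
        using convex_on_slope_le(1)[OF cf xI q1I, of "q$i"] xq by simp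
      have a2: "(f x - f (q$i + 1)) / (x - (q$i + 1)) \<le> (f (q$i) - f (q$i + 1)) / (q$i - (q$i + 1))"
        using convex_on_slope_le(2)[OF cf xI q1I, of "q$i"] xq by simp
      have "(f x - f (q$i)) / (x - q$i) \<le> S i" using a1 a2 unfolding S_def by simp
      then have "(x - q$i) * S i \<le> f x - f (q$i)" using xq by (simp add: divide_le_eq mult.commute)
      moreover have "x - q$i = t * (p$i - q$i)" unfolding x_def by simp
      ultimately show ?thesis unfolding x_def by (simp add: mult.assoc)
    qed
    have "t * (\<Sum>i\<in>UNIV. (p - q)$i * S i) \<le> (\<Sum>i\<in>UNIV. f ((q + t *\<^sub>R (p - q))$i) - f (q$i))"
      unfolding sum_distrib_left by (rule sum_mono) (use each in auto)
    also have "\<dots> = F (q + t *\<^sub>R (p - q)) - F q" using Fs zK qK by (simp add: sum_subtractf)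
    finally show ?thesis using t by (simp add: le_divide_eq mult.commute)
  qed
  have "ereal (\<Sum>i\<in>UNIV. (p - q)$i * S i) \<le> dir_deriv F q (p - q)"
    unfolding dir_deriv_def by (rule INF_greatest) (use low in auto)
  moreover have "dir_deriv F q (p - q) \<le> ereal (F p - F q)" using dd_le1[of F q "p - q"] by simp
  ultimately obtain d where "dir_deriv F q (p - q) = ereal d" by (cases "dir_deriv F q (p - q)") auto
  then show ?thesis unfolding bregman_def using p by simp
qed



lemma sep_core:
  fixes F :: "real^'n \<Rightarrow> real" and f :: "real \<Rightarrow> real"
  assumes cI: "convex I" and cf: "convex_on I f"
    and KI: "K = {p. \<forall>i. p$i \<in> I}" and Fs: "\<forall>p\<in>K. F p = (\<Sum>i\<in>UNIV. f (p$i))"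
    and orth: "nonneg_orthant \<subseteq> K" and cK: "convex K" and cF: "convex_on K F"
    and strict: "\<And>a. a \<in> I \<Longrightarrow> a < 0 \<Longrightarrow> 2 * f (a/2) < f a + f 0"
    and p: "p \<in> K" and q: "q \<in> nonneg_orthant" and pk: "p$k < 0"
    and fin: "bregman F K p q < \<infinity>"
  shows "bregman F K (\<chi> i. if i = k then 0 else p$i) q < bregman F K p q"
proof -
  define Tp :: "real^'n" where "Tp = (\<chi> i. if i = k then 0 else p$i)"
  define a where "a = p$k"
  define c where "c = q$k"
  have qK: "q \<in> K" using q orth by blast
  have zI: "0 \<in> I" using nonneg_in_I[OF KI orth] by simp
  have aI: "a \<in> I" using p unfolding KI a_def by simp
  have c0: "0 \<le> c" using q unfolding nonneg_orthant_def c_def by simp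
  have a0: "a < 0" using pk a_def by simp
  have TpK: "Tp \<in> K" using p zI unfolding KI Tp_def by auto
  define Q where "Q u t = (F (q + t *\<^sub>R (u - q)) - F q) / t" for u t
  have ddQ: "dir_deriv F q (u - q) = (INF t\<in>{0<..1}. ereal (Q u t))" for u
    unfolding dir_deriv_def Q_def by simp
  define M where "M = 2 * (f (a/2) - f 0)"
  have key: "Q p t \<le> Q Tp t + M" if t: "0 < t" "t \<le> 1/2" for t
  proof -
    define zp where "zp = q + t *\<^sub>R (p - q)"
    define zT where "zT = q + t *\<^sub>R (Tp - q)"
    have zpK: "zp \<in> K" using seg_in[OF cK qK p] t unfolding zp_def by simp
    have zTK: "zT \<in> K" using seg_in[OF cK qK TpK] t unfolding zT_def by simp
    define L where "L = c + t * (a - c)"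
    define R where "R = c + t * (0 - c)"
    have zpk: "zp$k = L" unfolding zp_def L_def a_def c_def by simp
    have zTk: "zT$k = R" unfolding zT_def R_def Tp_def c_def by simp
    have same: "\<forall>i. i \<noteq> k \<longrightarrow> f (zp$i) = f (zT$i)"
      unfolding zp_def zT_def Tp_def by simp
    have "F zp - F zT = (\<Sum>i\<in>UNIV. f (zp$i)) - (\<Sum>i\<in>UNIV. f (zT$i))" using Fs zpK zTK by simp
    also have "\<dots> = f L - f R" using sum_single_diff[OF same] zpk zTk by simp
    finally have FzL: "F zp - F zT = f L - f R" .
    have LI: "L \<in> I" using zpK zpk unfolding KI by auto
    have RI: "R \<in> I" using zTK zTk unfolding KI by auto
    have a2I: "a/2 \<in> I" using convex_real_between[OF cI aI zI, of "a/2"] a0 by linarith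
    have tc: "0 \<le> (1 - t) * c" using t c0 by simp
    have ta: "a/2 \<le> t * a"
    proof -
      have "(1/2 - t) * a \<le> 0" using t a0 by (intro mult_nonneg_nonpos) auto
      then show ?thesis by (simp add: algebra_simps)
    qed
    have LR: "L - R = t * a" unfolding L_def R_def by (simp add: algebra_simps)
    have ta0: "t * a < 0" using t a0 by (simp add: mult_pos_neg)
    have h1: "a/2 \<le> L" using tc ta unfolding L_def by (simp add: algebra_simps)
    have h2: "0 \<le> R" using tc unfolding R_def by (simp add: algebra_simps)
    have h3: "L < R" using LR ta0 by simp
    have sl: "(f (a/2) - f 0) / (a/2 - 0) \<le> (f L - f R) / (L - R)"
      using slope_mono[OF cf a2I zI LI RI h1 h2 _ h3] a0 by simp
    have "a * ((f L - f R) / (L - R)) \<le> a * ((f (a/2) - f 0) / (a/2 - 0))"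
      using sl a0 by (intro mult_left_mono_neg) auto
    also have "a * ((f (a/2) - f 0) / (a/2 - 0)) = M" unfolding M_def using a0 by (simp add: field_simps)
    finally have b1: "a * ((f L - f R) / (L - R)) \<le> M" .
    have "a * ((f L - f R) / (L - R)) = (f L - f R) / t" unfolding LR using t a0 by (simp add: field_simps)
    then have b2: "(F zp - F zT) / t \<le> M" using b1 FzL by simp
    have "Q p t - Q Tp t = (F zp - F zT) / t" unfolding Q_def zp_def zT_def by (simp add: diff_divide_distrib)
    then show ?thesis using b2 by simp
  qed
  have mono: "Q Tp s \<le> Q Tp t" if "0 < s" "s \<le> t" "t \<le> 1" for s t
    unfolding Q_def using Q_mono[OF cF cK qK TpK that] .
  have ddp_le: "dir_deriv F q (p - q) \<le> ereal (F p - F q)" using dd_le1[of F q "p - q"] by simp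
  have ddp_fin: "dir_deriv F q (p - q) \<noteq> -\<infinity>" using fin p unfolding bregman_def by auto
  obtain \<delta> where \<delta>: "dir_deriv F q (p - q) = ereal \<delta>" using ddp_le ddp_fin by (cases "dir_deriv F q (p - q)") auto
  have lowT: "ereal (\<delta> - M) \<le> dir_deriv F q (Tp - q)"
    unfolding ddQ
  proof (rule INF_greatest)
    fix t assume "t \<in> {0<..(1::real)}"
    then have t: "0 < t" "t \<le> 1" by auto
    define s where "s = min t (1/2)"
    have s: "0 < s" "s \<le> 1/2" "s \<le> t" using t unfolding s_def by auto
    have "ereal \<delta> \<le> ereal (Q p s)" unfolding \<delta>[symmetric] ddQ by (rule INF_lower) (use s in auto)
    then have "\<delta> \<le> Q p s" by simp
    also have "\<dots> \<le> Q Tp s + M" using key s by simp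
    also have "\<dots> \<le> Q Tp t + M" using mono[of s t] s t by simp
    finally show "ereal (\<delta> - M) \<le> ereal (Q Tp t)" by simp
  qed
  have ddT_le: "dir_deriv F q (Tp - q) \<le> ereal (F Tp - F q)" using dd_le1[of F q "Tp - q"] by simp
  obtain e where e: "dir_deriv F q (Tp - q) = ereal e" using lowT ddT_le by (cases "dir_deriv F q (Tp - q)") auto
  have eM: "\<delta> - M \<le> e" using lowT e by simp
  have same2: "\<forall>i. i \<noteq> k \<longrightarrow> f (p$i) = f (Tp$i)" unfolding Tp_def by simp
  have "F p - F Tp = (\<Sum>i\<in>UNIV. f (p$i)) - (\<Sum>i\<in>UNIV. f (Tp$i))" using Fs p TpK by simp
  also have "\<dots> = f a - f 0" using sum_single_diff[OF same2] unfolding a_def Tp_def by simp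
  finally have FpT: "F p - F Tp = f a - f 0" .
  have sM: "M < f a - f 0" using strict[OF aI a0] unfolding M_def by simp
  have "bregman F K Tp q = ereal (F Tp - F q - e)" unfolding bregman_def using TpK e by simp
  also have "\<dots> < ereal (F p - F q - \<delta>)" using eM FpT sM by simp
  also have "\<dots> = bregman F K p q" unfolding bregman_def using p \<delta> by simp
  finally show ?thesis unfolding Tp_def .
qed



lemma symA:
  fixes A :: "real^'n^'n"
  assumes sym: "transpose A = A"
  shows "u \<bullet> (A *v w) = w \<bullet> (A *v u)"
proof -
  have "u \<bullet> (A *v w) = (u v* A) \<bullet> w" by (simp add: dot_lmul_matrix)
  also have "u v* A = A *v u" using vector_transpose_matrix[of u A] sym by simp
  finally show ?thesis by (simp add: inner_commute)
qed

lemma quad_breg: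
  fixes A :: "real^'n^'n" and F :: "real^'n \<Rightarrow> real"
  assumes sym: "transpose A = A" and pd: "\<forall>v. v \<noteq> 0 \<longrightarrow> 0 < v \<bullet> (A *v v)"
    and Fq: "\<forall>p\<in>K. F p = (1/2) * (p \<bullet> (A *v p)) + b \<bullet> p"
    and cK: "convex K" and p: "p \<in> K" and q: "q \<in> K"
  shows "bregman F K p q = ereal ((1/2) * ((p - q) \<bullet> (A *v (p - q))))"
proof -
  define v where "v = p - q"
  define L where "L = q \<bullet> (A *v v) + b \<bullet> v"
  define k where "k = v \<bullet> (A *v v)"
  have k0: "0 \<le> k" using pd unfolding k_def by (cases "v = 0") (auto intro: less_imp_le)
  have vq: "v \<bullet> (A *v q) = q \<bullet> (A *v v)" using symA[OF sym] by simp
  have Fexp: "F (q + t *\<^sub>R v) - F q = t * L + t^2/2 * k" if t: "0 \<le> t" "t \<le> 1" for t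
  proof -
    have zK: "q + t *\<^sub>R v \<in> K" using seg_in[OF cK q p] t unfolding v_def by simp
    have "(q + t *\<^sub>R v) \<bullet> (A *v (q + t *\<^sub>R v)) = q \<bullet> (A *v q) + t * (q \<bullet> (A *v v)) + t * (v \<bullet> (A *v q)) + t^2 * k"
      unfolding k_def by (simp add: matrix_vector_right_distrib matrix_vector_mult_scaleR inner_add_left inner_add_right power2_eq_square algebra_simps)
    then show ?thesis using Fq zK q vq unfolding L_def by (simp add: inner_add_right algebra_simps)
  qed
  have Qt: "(F (q + t *\<^sub>R v) - F q) / t = L + t/2 * k" if t: "0 < t" "t \<le> 1" for t
    using Fexp[of t] t by (simp add: field_simps power2_eq_square)
  have dd: "dir_deriv F q v = ereal L"
  proof (rule antisym)
    show "ereal L \<le> dir_deriv F q v" unfolding dir_deriv_def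
    proof (rule INF_greatest)
      fix t assume "t \<in> {0<..(1::real)}"
      then show "ereal L \<le> ereal ((F (q + t *\<^sub>R v) - F q) / t)" using Qt[of t] k0 by simp
    qed
    show "dir_deriv F q v \<le> ereal L"
    proof (rule ereal_le_epsilon2)
      fix e :: real assume e: "0 < e"
      define t where "t = min 1 (e / (k + 1))"
      have t: "0 < t" "t \<le> 1" using e k0 unfolding t_def by auto
      have "t * k \<le> e"
      proof -
        have "t * k \<le> (e / (k + 1)) * k" using k0 unfolding t_def by (intro mult_right_mono) auto
        also have "\<dots> \<le> e" using e k0 by (simp add: field_simps)
        finally show ?thesis .
      qed
      then have "L + t/2 * k \<le> L + e" using e t k0 by simp
      moreover have "dir_deriv F q v \<le> ereal ((F (q + t *\<^sub>R v) - F q) / t)"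
        unfolding dir_deriv_def by (rule INF_lower) (use t in auto)
      ultimately show "dir_deriv F q v \<le> ereal L + ereal e" using Qt[OF t] by (simp add: order_trans)
    qed
  qed
  have "F p - F q - L = (1/2) * k" using Fexp[of 1] unfolding v_def by simp
  then show ?thesis unfolding bregman_def using p dd unfolding v_def k_def by simp
qed

lemma quad_ident:
  fixes A :: "real^'n^'n"
  assumes sym: "transpose A = A" and W: "D1 + D2 > 0"
    and c: "c = (1 / (D1 + D2)) *\<^sub>R (D1 *\<^sub>R a + D2 *\<^sub>R b)"
  shows "D1 * ((p - a) \<bullet> (A *v (p - a))) + D2 * ((p - b) \<bullet> (A *v (p - b)))
       = (D1 + D2) * ((p - c) \<bullet> (A *v (p - c)))
         + (D1 * ((c - a) \<bullet> (A *v (c - a))) + D2 * ((c - b) \<bullet> (A *v (c - b))))"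
proof -
  define nA where "nA u = u \<bullet> (A *v u)" for u
  have exp: "nA (x + y) = nA x + 2 * (x \<bullet> (A *v y)) + nA y" for x y
    unfolding nA_def using symA[OF sym, of y x]
    by (simp add: matrix_vector_right_distrib inner_add_left inner_add_right)
  have z: "D1 *\<^sub>R (c - a) + D2 *\<^sub>R (c - b) = 0"
  proof -
    have "(D1 + D2) *\<^sub>R c = D1 *\<^sub>R a + D2 *\<^sub>R b" using W unfolding c by simp
    then show ?thesis by (simp add: algebra_simps)
  qed
  have cross: "D1 * ((p - c) \<bullet> (A *v (c - a))) + D2 * ((p - c) \<bullet> (A *v (c - b))) = 0"
  proof -
    have "D1 * ((p - c) \<bullet> (A *v (c - a))) + D2 * ((p - c) \<bullet> (A *v (c - b)))
        = (p - c) \<bullet> (A *v (D1 *\<^sub>R (c - a) + D2 *\<^sub>R (c - b)))"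
      by (simp add: matrix_vector_right_distrib matrix_vector_mult_scaleR inner_add_right)
    also have "\<dots> = 0" unfolding z by simp
    finally show ?thesis .
  qed
  have pa: "p - a = (p - c) + (c - a)" and pb: "p - b = (p - c) + (c - b)" by simp_all
  have "D1 * nA (p - a) + D2 * nA (p - b) = (D1 + D2) * nA (p - c) + (D1 * nA (c - a) + D2 * nA (c - b))
       + 2 * (D1 * ((p - c) \<bullet> (A *v (c - a))) + D2 * ((p - c) \<bullet> (A *v (c - b))))"
    unfolding pa pb exp by (simp add: algebra_simps)
  then show ?thesis using cross unfolding nA_def by simp
qed



lemma ereal_sum_strict:
  fixes g h :: "'a \<Rightarrow> ereal"
  assumes A: "finite A" and g0: "\<forall>x\<in>A. 0 \<le> g x" and gh: "\<forall>x\<in>A. g x \<le> h x"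
    and hf: "\<forall>x\<in>A. h x < \<infinity>" and x0: "x0 \<in> A" and lt: "g x0 < h x0"
  shows "sum g A < sum h A"
proof -
  have ge: "g x = ereal (real_of_ereal (g x))" if "x \<in> A" for x
    using g0 gh hf that by (cases "g x") auto
  have he: "h x = ereal (real_of_ereal (h x))" if "x \<in> A" for x
    using g0 gh hf that by (cases "h x") auto
  have "sum g A = (\<Sum>x\<in>A. ereal (real_of_ereal (g x)))" by (rule sum.cong[OF refl]) (rule ge)
  then have sg: "sum g A = ereal (\<Sum>x\<in>A. real_of_ereal (g x))" by (simp only: sum_ereal)
  have "sum h A = (\<Sum>x\<in>A. ereal (real_of_ereal (h x)))" by (rule sum.cong[OF refl]) (rule he)
  then have sh: "sum h A = ereal (\<Sum>x\<in>A. real_of_ereal (h x))" by (simp only: sum_ereal)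
  have "(\<Sum>x\<in>A. real_of_ereal (g x)) < (\<Sum>x\<in>A. real_of_ereal (h x))"
  proof (rule sum_strict_mono_ex1[OF A])
    show "\<forall>x\<in>A. real_of_ereal (g x) \<le> real_of_ereal (h x)"
    proof
      fix x assume x: "x \<in> A"
      have "ereal (real_of_ereal (g x)) \<le> ereal (real_of_ereal (h x))" using gh x ge[OF x] he[OF x] by simp
      then show "real_of_ereal (g x) \<le> real_of_ereal (h x)" by (simp only: ereal_less_eq(3))
    qed
    show "\<exists>a\<in>A. real_of_ereal (g a) < real_of_ereal (h a)"
    proof
      have "ereal (real_of_ereal (g x0)) < ereal (real_of_ereal (h x0))" using lt ge[OF x0] he[OF x0] by simp
      then show "real_of_ereal (g x0) < real_of_ereal (h x0)" by (metis less_ereal.simps(1))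
    qed (rule x0)
  qed
  then show ?thesis using sg sh by simp
qed

lemma obj_terms_fin:
  assumes Dp: "\<forall>x. 0 < D x" and fin: "bregman_obj D F K \<pi>0 \<pi> < \<infinity>"
  shows "bregman F K (\<pi> x) (\<pi>0 x) < \<infinity>"
proof (rule ccontr)
  assume "\<not> ?thesis"
  then have "bregman F K (\<pi> x) (\<pi>0 x) = \<infinity>" by simp
  then have "ereal (D x) * bregman F K (\<pi> x) (\<pi>0 x) = \<infinity>" using Dp[rule_format, of x] by simp
  then have "bregman_obj D F K \<pi>0 \<pi> = \<infinity>" unfolding bregman_obj_def
    by (subst sum_Pinfty) auto
  then show False using fin by simp
qed

lemma breg_fin_in: "bregman F K p q < \<infinity> \<Longrightarrow> p \<in> K"
  unfolding bregman_def by (cases "p \<in> K") auto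

lemma obj_fin_of_terms:
  assumes "\<And>x. bregman F K (\<pi> x) (\<pi>0 x) < \<infinity>"
  shows "bregman_obj D F K \<pi>0 \<pi> < \<infinity>"
proof -
  have "ereal (D x) * bregman F K (\<pi> x) (\<pi>0 x) \<noteq> \<infinity>" for x
    using assms[of x] bregman_nonneg[of F K "\<pi> x" "\<pi>0 x"] by (cases "bregman F K (\<pi> x) (\<pi>0 x)") auto
  then have "bregman_obj D F K \<pi>0 \<pi> \<noteq> \<infinity>" unfolding bregman_obj_def
    by (subst sum_Pinfty) auto
  then show ?thesis by (simp add: less_top)
qed



lemma sep_case:
  fixes D :: "'x::finite \<Rightarrow> real" and \<Phi> :: "'x \<Rightarrow> 'x"
    and \<pi>0 :: "'x \<Rightarrow> real^'y::finite" and F :: "real^'y \<Rightarrow> real"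
    and K :: "(real^'y) set" and \<pi>bar :: "'x \<Rightarrow> real^'y" and f :: "real \<Rightarrow> real"
  assumes D_pos: "\<forall>x. 0 < D x"
    and invol: "\<forall>x. \<Phi> (\<Phi> x) = x"
    and pi0: "\<forall>x. \<pi>0 x \<in> prob_simplex"
    and leg: "legendre F K"
    and K_convex: "convex K"
    and K_orth: "nonneg_orthant \<subseteq> K"
    and cI: "convex I" and cf: "convex_on I f" and KI: "K = {p. \<forall>i. p $ i \<in> I}"
    and Fs: "\<forall>p\<in>K. F p = (\<Sum>i\<in>UNIV. f (p $ i))"
    and min_mem: "\<pi>bar \<in> coh_lin \<Phi>"
    and min_opt: "\<forall>\<pi>\<in>coh_lin \<Phi>. bregman_obj D F K \<pi>0 \<pi>bar \<le> bregman_obj D F K \<pi>0 \<pi>"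
  shows "\<forall>x. \<pi>bar x \<in> nonneg_orthant"
proof (rule ccontr)
  assume contra: "\<not> ?thesis"
  have cF: "convex_on K F" using leg unfolding legendre_def by blast
  have zI: "0 \<in> I" using nonneg_in_I[OF KI K_orth] by simp
  have strict: "2 * f (a/2) < f a + f 0" if "a \<in> I" "a < 0" for a
    using sep_strict[OF leg cI cf KI Fs that zI] .
  have pi0orth: "\<pi>0 x \<in> nonneg_orthant" for x
    using pi0 unfolding prob_simplex_def nonneg_orthant_def by auto
  define \<pi>s where "\<pi>s x = (\<chi> i. min (\<pi>0 x $ i) (\<pi>0 (\<Phi> x) $ i))" for x
  have \<pi>s_coh: "\<pi>s \<in> coh_lin \<Phi>" unfolding coh_lin_def \<pi>s_def using invol by (simp add: min.commute)
  have \<pi>s_orth: "\<pi>s x \<in> nonneg_orthant" for x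
    using pi0orth[of x] pi0orth[of "\<Phi> x"] unfolding \<pi>s_def nonneg_orthant_def by simp
  have \<pi>s_fin: "bregman F K (\<pi>s x) (\<pi>0 x) < \<infinity>" for x
    using sep_fin[OF cI cf KI Fs K_orth K_convex _ pi0orth[of x]] \<pi>s_orth[of x] K_orth
    unfolding \<pi>s_def by auto
  have "bregman_obj D F K \<pi>0 \<pi>s < \<infinity>" using obj_fin_of_terms \<pi>s_fin by blast
  then have objfin: "bregman_obj D F K \<pi>0 \<pi>bar < \<infinity>" using min_opt \<pi>s_coh by (meson le_less_trans)
  have finb: "bregman F K (\<pi>bar x) (\<pi>0 x) < \<infinity>" for x using obj_terms_fin[OF D_pos objfin] .
  have inK: "\<pi>bar x \<in> K" for x using breg_fin_in[OF finb] .
  obtain x0 where x0: "\<pi>bar x0 \<notin> nonneg_orthant" using contra by blast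
  then have "\<not> (\<forall>i. 0 \<le> \<pi>bar x0 $ i)" unfolding nonneg_orthant_def by simp
  then obtain k where "\<not> 0 \<le> \<pi>bar x0 $ k" by blast
  then have k: "\<pi>bar x0 $ k < 0" by simp
  define \<pi>' where "\<pi>' x = (\<chi> i. if i = k then max (\<pi>bar x $ k) 0 else \<pi>bar x $ i)" for x
  have coh: "\<pi>bar (\<Phi> x) = \<pi>bar x" for x
  proof -
    from min_mem have "\<pi>bar x = \<pi>bar (\<Phi> x)" unfolding coh_lin_def by blast
    then show ?thesis by (rule sym)
  qed
  have \<pi>'_coh: "\<pi>' \<in> coh_lin \<Phi>" unfolding coh_lin_def
  proof (intro CollectI allI)
    fix x
    have e: "\<pi>bar (\<Phi> x) = \<pi>bar x" by (rule coh)
    show "\<pi>' x = \<pi>' (\<Phi> x)" unfolding \<pi>'_def e ..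
  qed
  have step: "bregman F K (\<pi>' x) (\<pi>0 x) \<le> bregman F K (\<pi>bar x) (\<pi>0 x)
     \<and> (\<pi>bar x $ k < 0 \<longrightarrow> bregman F K (\<pi>' x) (\<pi>0 x) < bregman F K (\<pi>bar x) (\<pi>0 x))" for x
  proof (cases "\<pi>bar x $ k < 0")
    case True
    have "\<pi>' x = (\<chi> i. if i = k then 0 else \<pi>bar x $ i)" unfolding \<pi>'_def using True by (intro arg_cong[where f=vec_lambda] ext) simp
    then have "bregman F K (\<pi>' x) (\<pi>0 x) < bregman F K (\<pi>bar x) (\<pi>0 x)"
      using sep_core[OF cI cf KI Fs K_orth K_convex cF strict inK[of x] pi0orth[of x] True finb[of x]]
      by simp
    then show ?thesis by simp
  next
    case False
    have "\<pi>' x = \<pi>bar x"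
    proof (rule iffD2[OF vec_eq_iff], rule allI)
      fix i show "\<pi>' x $ i = \<pi>bar x $ i" unfolding \<pi>'_def using False by (cases "i = k") auto
    qed
    then show ?thesis using False by simp
  qed
  have "bregman_obj D F K \<pi>0 \<pi>' < bregman_obj D F K \<pi>0 \<pi>bar"
    unfolding bregman_obj_def
  proof (rule ereal_sum_strict)
    show "finite (UNIV :: 'x set)" by simp
    show "\<forall>x\<in>UNIV. 0 \<le> ereal (D x) * bregman F K (\<pi>' x) (\<pi>0 x)"
    proof
      fix x
      have "0 \<le> ereal (D x)" using D_pos[rule_format, of x] by simp
      then show "0 \<le> ereal (D x) * bregman F K (\<pi>' x) (\<pi>0 x)"
        using bregman_nonneg[of F K "\<pi>' x" "\<pi>0 x"] by (simp add: ereal_zero_le_0_iff)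
    qed
    show "\<forall>x\<in>UNIV. ereal (D x) * bregman F K (\<pi>' x) (\<pi>0 x) \<le> ereal (D x) * bregman F K (\<pi>bar x) (\<pi>0 x)"
      using step D_pos by (auto intro!: ereal_mult_left_mono simp: less_imp_le)
    show "\<forall>x\<in>UNIV. ereal (D x) * bregman F K (\<pi>bar x) (\<pi>0 x) < \<infinity>"
    proof
      fix x
      show "ereal (D x) * bregman F K (\<pi>bar x) (\<pi>0 x) < \<infinity>"
        using finb[of x] bregman_nonneg[of F K "\<pi>bar x" "\<pi>0 x"]
        by (cases "bregman F K (\<pi>bar x) (\<pi>0 x)") auto
    qed
    show "x0 \<in> UNIV" by simp
    show "ereal (D x0) * bregman F K (\<pi>' x0) (\<pi>0 x0) < ereal (D x0) * bregman F K (\<pi>bar x0) (\<pi>0 x0)"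
      using step[of x0] k D_pos by (intro ereal_mult_strict_left_mono) auto
  qed
  then show False using min_opt \<pi>'_coh by (meson not_le)
qed



lemma quad_case:
  fixes D :: "'x::finite \<Rightarrow> real" and \<Phi> :: "'x \<Rightarrow> 'x"
    and \<pi>0 :: "'x \<Rightarrow> real^'y::finite" and F :: "real^'y \<Rightarrow> real"
    and K :: "(real^'y) set" and \<pi>bar :: "'x \<Rightarrow> real^'y" and A :: "real^'y^'y" and b :: "real^'y"
  assumes D_pos: "\<forall>x. 0 < D x"
    and invol: "\<forall>x. \<Phi> (\<Phi> x) = x"
    and pi0: "\<forall>x. \<pi>0 x \<in> prob_simplex"
    and K_convex: "convex K"
    and K_orth: "nonneg_orthant \<subseteq> K"
    and sym: "transpose A = A" and pd: "\<forall>v. v \<noteq> 0 \<longrightarrow> 0 < v \<bullet> (A *v v)"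
    and Fq: "\<forall>p\<in>K. F p = (1/2) * (p \<bullet> (A *v p)) + b \<bullet> p"
    and min_mem: "\<pi>bar \<in> coh_lin \<Phi>"
    and min_opt: "\<forall>\<pi>\<in>coh_lin \<Phi>. bregman_obj D F K \<pi>0 \<pi>bar \<le> bregman_obj D F K \<pi>0 \<pi>"
  shows "\<forall>x. \<pi>bar x \<in> nonneg_orthant"
proof (rule ccontr)
  assume contra: "\<not> ?thesis"
  define nA where "nA u = u \<bullet> (A *v u)" for u
  have nA0: "0 \<le> nA u" for u using pd unfolding nA_def by (cases "u = 0") (auto intro: less_imp_le)
  have nApos: "u \<noteq> 0 \<Longrightarrow> 0 < nA u" for u using pd unfolding nA_def by blast
  have pi0orth: "\<pi>0 x \<in> nonneg_orthant" for x
    using pi0 unfolding prob_simplex_def nonneg_orthant_def by auto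
  have pi0K: "\<pi>0 x \<in> K" for x using pi0orth K_orth by blast
  define J where "J \<pi> = (\<Sum>x\<in>UNIV. D x * nA (\<pi> x - \<pi>0 x))" for \<pi> :: "'x \<Rightarrow> real^'y"
  have objform: "bregman_obj D F K \<pi>0 \<pi> = ereal ((1/2) * J \<pi>)" if inK: "\<forall>x. \<pi> x \<in> K" for \<pi>
  proof -
    have "bregman_obj D F K \<pi>0 \<pi> = (\<Sum>x\<in>UNIV. ereal (D x * ((1/2) * nA (\<pi> x - \<pi>0 x))))"
      unfolding bregman_obj_def
    proof (rule sum.cong[OF refl])
      fix x
      show "ereal (D x) * bregman F K (\<pi> x) (\<pi>0 x) = ereal (D x * ((1/2) * nA (\<pi> x - \<pi>0 x)))"
        using quad_breg[OF sym pd Fq K_convex inK[rule_format, of x] pi0K[of x]] unfolding nA_def by simp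
    qed
    also have "\<dots> = ereal (\<Sum>x\<in>UNIV. D x * ((1/2) * nA (\<pi> x - \<pi>0 x)))" by (rule sum_ereal)
    also have "(\<Sum>x\<in>UNIV. D x * ((1/2) * nA (\<pi> x - \<pi>0 x))) = (1/2) * J \<pi>"
      unfolding J_def by (simp add: sum_distrib_left algebra_simps)
    finally show ?thesis .
  qed
  define W where "W x = D x + D (\<Phi> x)" for x
  have Wpos: "0 < W x" for x using D_pos unfolding W_def by (simp add: add_pos_pos)
  define c where "c x = (1 / W x) *\<^sub>R (D x *\<^sub>R \<pi>0 x + D (\<Phi> x) *\<^sub>R \<pi>0 (\<Phi> x))" for x
  have c_coh: "c \<in> coh_lin \<Phi>" unfolding coh_lin_def c_def W_def using invol by (simp add: add.commute)
  have c_orth: "c x \<in> nonneg_orthant" for x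
  proof -
    have "0 \<le> c x $ i" for i
    proof -
      have "0 \<le> \<pi>0 x $ i" "0 \<le> \<pi>0 (\<Phi> x) $ i" using pi0orth unfolding nonneg_orthant_def by auto
      then show ?thesis unfolding c_def using Wpos[of x] D_pos by (simp add: less_imp_le)
    qed
    then show ?thesis unfolding nonneg_orthant_def by simp
  qed
  have cK: "\<forall>x. c x \<in> K" using c_orth K_orth by blast
  have "bregman_obj D F K \<pi>0 \<pi>bar \<le> ereal ((1/2) * J c)" using min_opt[rule_format, OF c_coh] objform[OF cK] by simp
  then have objfin: "bregman_obj D F K \<pi>0 \<pi>bar < \<infinity>" by (rule le_less_trans) simp
  have inK: "\<forall>x. \<pi>bar x \<in> K" using breg_fin_in[OF obj_terms_fin[OF D_pos objfin]] by blast
  have Jle: "J \<pi>bar \<le> J c" using min_opt[rule_format, OF c_coh] objform[OF cK] objform[OF inK] by simp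
  have coh: "\<pi>bar (\<Phi> x) = \<pi>bar x" for x
  proof -
    from min_mem have "\<pi>bar x = \<pi>bar (\<Phi> x)" unfolding coh_lin_def by blast
    then show ?thesis by (rule HOL.sym)
  qed
  have ccoh: "c (\<Phi> x) = c x" for x
  proof -
    from c_coh have "c x = c (\<Phi> x)" unfolding coh_lin_def by blast
    then show ?thesis by (rule HOL.sym)
  qed
  define G where "G x p = D x * nA (p - \<pi>0 x) + D (\<Phi> x) * nA (p - \<pi>0 (\<Phi> x))" for x p
  have reidx: "J \<pi> = (\<Sum>x\<in>UNIV. D (\<Phi> x) * nA (\<pi> x - \<pi>0 (\<Phi> x)))"
    if pc: "\<And>x. \<pi> (\<Phi> x) = \<pi> x" for \<pi>
    unfolding J_def
  proof (rule sum.reindex_bij_witness[of _ \<Phi> \<Phi>])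
    fix a :: 'x
    show "\<Phi> (\<Phi> a) = a" using invol by simp
    show "\<Phi> a \<in> UNIV" by simp
    show "\<Phi> (\<Phi> a) = a" using invol by simp
    show "\<Phi> a \<in> UNIV" by simp
    show "D (\<Phi> (\<Phi> a)) * nA (\<pi> (\<Phi> a) - \<pi>0 (\<Phi> (\<Phi> a))) = D a * nA (\<pi> a - \<pi>0 a)"
      using invol pc[of a] by simp
  qed
  have twoJ: "2 * J \<pi> = (\<Sum>x\<in>UNIV. G x (\<pi> x))" if pc: "\<And>x. \<pi> (\<Phi> x) = \<pi> x" for \<pi>
  proof -
    have "2 * J \<pi> = J \<pi> + J \<pi>" by simp
    also have "\<dots> = (\<Sum>x\<in>UNIV. D x * nA (\<pi> x - \<pi>0 x)) + (\<Sum>x\<in>UNIV. D (\<Phi> x) * nA (\<pi> x - \<pi>0 (\<Phi> x)))"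
      using reidx[of \<pi>, OF pc] unfolding J_def by simp
    also have "\<dots> = (\<Sum>x\<in>UNIV. G x (\<pi> x))" unfolding G_def by (simp add: sum.distrib)
    finally show ?thesis .
  qed
  have ident: "G x p = W x * nA (p - c x) + G x (c x)" for x p
    using quad_ident[OF sym, of "D x" "D (\<Phi> x)" "c x" "\<pi>0 x" "\<pi>0 (\<Phi> x)" p] Wpos[of x]
    unfolding G_def nA_def W_def c_def by simp
  have "2 * J \<pi>bar - 2 * J c = (\<Sum>x\<in>UNIV. G x (\<pi>bar x)) - (\<Sum>x\<in>UNIV. G x (c x))"
    using twoJ[of \<pi>bar] twoJ[of c] coh ccoh by simp
  also have "\<dots> = (\<Sum>x\<in>UNIV. G x (\<pi>bar x) - G x (c x))" by (simp add: sum_subtractf)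
  also have "\<dots> = (\<Sum>x\<in>UNIV. W x * nA (\<pi>bar x - c x))"
    by (rule sum.cong[OF refl]) (subst ident, simp)
  finally have diff: "2 * J \<pi>bar - 2 * J c = (\<Sum>x\<in>UNIV. W x * nA (\<pi>bar x - c x))" .
  obtain x0 where x0: "\<pi>bar x0 \<notin> nonneg_orthant" using contra by blast
  then have "\<pi>bar x0 \<noteq> c x0" using c_orth by metis
  then have "0 < W x0 * nA (\<pi>bar x0 - c x0)" using Wpos[of x0] nApos[of "\<pi>bar x0 - c x0"] by simp
  then have "0 < (\<Sum>x\<in>UNIV. W x * nA (\<pi>bar x - c x))"
    using Wpos nA0 by (intro sum_pos2[of UNIV x0]) (auto intro: mult_nonneg_nonneg less_imp_le)
  then show False using diff Jle by simp
qed



theorem theorem11: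
  fixes D :: "'x::finite \<Rightarrow> real"
    and \<Phi> :: "'x \<Rightarrow> 'x"
    and \<pi>0 :: "'x \<Rightarrow> real^'y::finite"
    and F :: "real^'y \<Rightarrow> real"
    and K :: "(real^'y) set"
    and \<pi>bar :: "'x \<Rightarrow> real^'y"
  assumes D_pos: "\<forall>x. 0 < D x" and D_sum: "(\<Sum>x\<in>UNIV. D x) = 1"
    and invol: "\<forall>x. \<Phi> (\<Phi> x) = x"
    and pi0: "\<forall>x. \<pi>0 x \<in> prob_simplex"
    and leg: "legendre F K"
    and K_closed: "closed K" and K_convex: "convex K"
    and K_orth: "nonneg_orthant \<subseteq> K"
    and F_form:
      "(\<exists>A b. transpose A = A \<and> (\<forall>v. v \<noteq> 0 \<longrightarrow> 0 < v \<bullet> (A *v v)) \<and>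
              (\<forall>p\<in>K. F p = (1/2) * (p \<bullet> (A *v p)) + b \<bullet> p))
       \<or> (\<exists>(f::real \<Rightarrow> real) I. convex I \<and> convex_on I f \<and> K = {p. \<forall>i. p $ i \<in> I} \<and>
              (\<forall>p\<in>K. F p = (\<Sum>i\<in>UNIV. f (p $ i))))"
    and min_mem: "\<pi>bar \<in> coh_lin \<Phi>"
    and min_opt: "\<forall>\<pi>\<in>coh_lin \<Phi>. bregman_obj D F K \<pi>0 \<pi>bar \<le> bregman_obj D F K \<pi>0 \<pi>"
  shows "\<pi>bar \<in> coh_pos \<Phi>"
proof -
  have "\<forall>x. \<pi>bar x \<in> nonneg_orthant"
    using F_form
  proof
    assume "\<exists>A b. transpose A = A \<and> (\<forall>v. v \<noteq> 0 \<longrightarrow> 0 < v \<bullet> (A *v v)) \<and>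
              (\<forall>p\<in>K. F p = (1/2) * (p \<bullet> (A *v p)) + b \<bullet> p)"
    then obtain A b where sym: "transpose A = A" and pd: "\<forall>v. v \<noteq> 0 \<longrightarrow> 0 < v \<bullet> (A *v v)"
      and Fq: "\<forall>p\<in>K. F p = (1/2) * (p \<bullet> (A *v p)) + b \<bullet> p" by blast
    show ?thesis using quad_case[OF D_pos invol pi0 K_convex K_orth sym pd Fq min_mem min_opt] .
  next
    assume "\<exists>(f::real \<Rightarrow> real) I. convex I \<and> convex_on I f \<and> K = {p. \<forall>i. p $ i \<in> I} \<and>
              (\<forall>p\<in>K. F p = (\<Sum>i\<in>UNIV. f (p $ i)))"
    then obtain f :: "real \<Rightarrow> real" and I where cI: "convex I" and cf: "convex_on I f"
      and KI: "K = {p. \<forall>i. p $ i \<in> I}" and Fs: "\<forall>p\<in>K. F p = (\<Sum>i\<in>UNIV. f (p $ i))" by blast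
    show ?thesis using sep_case[OF D_pos invol pi0 leg K_convex K_orth cI cf KI Fs min_mem min_opt] .
  qed
  then show ?thesis using min_mem unfolding coh_pos_def by blast
qed

end
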